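(* Let $\lambda_n$ denote the largest eigenvalue of the real symmetric $n\times n$ matrix $\mathcal A_n$ defined below. There exists $n_0$ such that for all integers $n\ge n_0$, $$4-\frac{40}{n}<\lambda_n<4-\frac{2}{n}.$$
   Context: For an integer $n\ge 3$, $\mathcal A_n=(a_{jk})_{j,k=0}^{n-1}$ is the $n\times n$ real matrix with diagonal entries $a_{jj}=2\cos\frac{2\pi j}{n}$, with $a_{j,j+1}=a_{j+1,j}=1$ for $0\le j\le n-2$, with $a_{0,n-1}=a_{n-1,0}=1$, and all other entries $0$. (It is the matrix of $x+x^{-1}+y+y^{-1}$ in the representation $T_1$ of the finite Heisenberg group $H_n$.) *)

theory Defs
  imports Complex_Main "Jordan_Normal_Form.Matrix" "Jordan_Normal_Form.Char_Poly"
begin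

definition heis_mat :: "nat \<Rightarrow> real mat" where
  "heis_mat n = mat n n (\<lambda>(j, k).
     if j = k then 2 * cos (2 * pi * real j / real n)
     else if j + 1 = k \<or> k + 1 = j \<or> (j = 0 \<and> k = n - 1) \<or> (j = n - 1 \<and> k = 0) then 1
     else 0)"

definition largest_eigenvalue :: "real mat \<Rightarrow> real" where
  "largest_eigenvalue A = Max {k. eigenvalue A k}"

end

theory Submission
  imports Defs "HOL-Analysis.Function_Topology"
begin


lemma cont_coord[continuous_intros]: "continuous_on A (\<lambda>x::nat\<Rightarrow>real. x i)"
  by (rule continuous_on_subset[OF continuous_on_product_coordinates]) auto

lemma sym_swap:
  fixes a :: "nat \<Rightarrow> nat \<Rightarrow> real"
  assumes sym: "\<And>i j. i < n \<Longrightarrow> j < n \<Longrightarrow> a i j = a j i"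
  shows "(\<Sum>i<n. v i * (\<Sum>j<n. a i j * w j)) = (\<Sum>i<n. w i * (\<Sum>j<n. a i j * v j))"
proof -
  have "(\<Sum>i<n. v i * (\<Sum>j<n. a i j * w j)) = (\<Sum>i<n. \<Sum>j<n. v i * a i j * w j)"
    by (simp add: sum_distrib_left mult.assoc)
  also have "\<dots> = (\<Sum>j<n. \<Sum>i<n. v i * a i j * w j)" by (rule sum.swap)
  also have "\<dots> = (\<Sum>j<n. w j * (\<Sum>i<n. a j i * v i))"
    by (auto simp: sum_distrib_left sym intro!: sum.cong)
  finally show ?thesis .
qed

lemma qf_expand:
  fixes a :: "nat \<Rightarrow> nat \<Rightarrow> real"
  assumes sym: "\<And>i j. i < n \<Longrightarrow> j < n \<Longrightarrow> a i j = a j i"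
  shows "(\<Sum>i<n. (v i + t * w i) * (\<Sum>j<n. a i j * (v j + t * w j))) =
     (\<Sum>i<n. v i * (\<Sum>j<n. a i j * v j)) + 2 * t * (\<Sum>i<n. w i * (\<Sum>j<n. a i j * v j))
     + t^2 * (\<Sum>i<n. w i * (\<Sum>j<n. a i j * w j))"
proof -
  have "(\<Sum>i<n. (v i + t * w i) * (\<Sum>j<n. a i j * (v j + t * w j))) =
     (\<Sum>i<n. v i * (\<Sum>j<n. a i j * v j)) + t * (\<Sum>i<n. v i * (\<Sum>j<n. a i j * w j))
     + t * (\<Sum>i<n. w i * (\<Sum>j<n. a i j * v j))
     + t^2 * (\<Sum>i<n. w i * (\<Sum>j<n. a i j * w j))"
    by (simp add: algebra_simps sum.distrib sum_distrib_left power2_eq_square)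
  then show ?thesis using sym_swap[OF sym, where v=v and w=w] by simp
qed

lemma nn_expand:
  "(\<Sum>i<n. (v i + t * w i)^2) = (\<Sum>i<n. (v i)^2) + 2 * t * (\<Sum>i<n. v i * w i) + t^2 * (\<Sum>i<n. (w i)^2 :: real)"
  by (simp add: algebra_simps sum.distrib sum_distrib_left power2_eq_square)

lemma nn_zero:
  fixes x :: "nat \<Rightarrow> real"
  assumes "(\<Sum>i<n. (x i)^2) = (0::real)" "i < n" shows "x i = 0"
proof -
  have "\<forall>i\<in>{..<n}. (x i)^2 = 0" by (rule sum_nonneg_eq_0_iff[THEN iffD1]) (use assms in auto)
  then show ?thesis using assms(2) by auto
qed

lemma eig_exists:
  fixes a :: "nat \<Rightarrow> nat \<Rightarrow> real" and x0 :: "nat \<Rightarrow> real"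
  assumes sym: "\<And>i j. i < n \<Longrightarrow> j < n \<Longrightarrow> a i j = a j i"
    and gt: "(\<Sum>i<n. x0 i * (\<Sum>j<n. a i j * x0 j)) > c * (\<Sum>i<n. (x0 i)^2)"
  shows "\<exists>\<mu> v. \<mu> > c \<and> (\<exists>i<n. v i \<noteq> 0) \<and> (\<forall>i<n. (\<Sum>j<n. a i j * v j) = \<mu> * v i)"
proof -
  define qf where "qf x = (\<Sum>i<n. x i * (\<Sum>j<n. a i j * x j))" for x :: "nat \<Rightarrow> real"
  define nn where "nn x = (\<Sum>i<n. (x i)^2)" for x :: "nat \<Rightarrow> real"
  define K where "K = PiE UNIV (\<lambda>i. if i < n then {-1..1} else {0::real})"
  define S where "S = K \<inter> {x. nn x = 1}"
  define nz where "nz x = (\<lambda>i. if i < n then x i / sqrt (nn x) else 0)" for x :: "nat \<Rightarrow> real"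
  have "compactin (product_topology (\<lambda>i. euclidean) UNIV) K"
    unfolding K_def by (subst compactin_PiE) auto
  then have cK: "compact K" by (simp add: euclidean_product_topology)
  have cont_nn: "continuous_on A nn" for A unfolding nn_def by (intro continuous_intros)
  have cont_qf: "continuous_on A qf" for A unfolding qf_def by (intro continuous_intros)
  have "closed {x. nn x = 1}"
    by (rule closed_Collect_eq) (auto intro: cont_nn continuous_intros)
  then have cS: "compact S" unfolding S_def using cK by (rule compact_Int_closed[rotated])
  have nn_ge: "nn x \<ge> 0" for x unfolding nn_def by (auto intro: sum_nonneg)
  have qf0: "qf x = 0" if "nn x = 0" for x
  proof -
    have "\<And>i. i < n \<Longrightarrow> x i = 0" using that nn_zero unfolding nn_def by blast
    then show ?thesis unfolding qf_def by simp
  qed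
  have nz: "nz x \<in> S \<and> qf (nz x) = qf x / nn x" if pos: "nn x > 0" for x
  proof -
    have r2: "(sqrt (nn x))^2 = nn x" using pos by simp
    have "nn (nz x) = (\<Sum>i<n. (x i)^2 / nn x)"
      unfolding nn_def nz_def by (intro sum.cong) (auto simp: power_divide r2[unfolded nn_def])
    also have "\<dots> = 1" using pos unfolding nn_def by (simp add: sum_divide_distrib[symmetric])
    finally have n1: "nn (nz x) = 1" .
    have "-1 \<le> x i / sqrt (nn x) \<and> x i / sqrt (nn x) \<le> 1" if "i < n" for i
    proof -
      have "(x i)^2 \<le> nn x" unfolding nn_def using that
        by (intro member_le_sum) auto
      then have "\<bar>x i\<bar> \<le> sqrt (nn x)" using real_le_rsqrt by (metis real_sqrt_abs real_sqrt_le_mono)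
      then have "\<bar>x i / sqrt (nn x)\<bar> \<le> 1" using pos by (simp add: abs_div)
      then show ?thesis unfolding abs_le_iff by linarith
    qed
    then have "nz x \<in> K" unfolding K_def nz_def by (auto simp: PiE_def extensional_def)
    moreover have "qf (nz x) = qf x / nn x"
    proof -
      have "qf (nz x) = (\<Sum>i<n. (x i * (\<Sum>j<n. a i j * x j)) / nn x)"
        unfolding qf_def nz_def
        by (intro sum.cong) (auto simp: sum_divide_distrib[symmetric] power2_eq_square[symmetric] r2 field_simps)
      then show ?thesis unfolding qf_def by (simp add: sum_divide_distrib[symmetric])
    qed
    ultimately show ?thesis using n1 unfolding S_def by auto
  qed
  have "nn x0 \<noteq> 0" using gt qf0[of x0] unfolding qf_def nn_def by auto
  then have x0pos: "nn x0 > 0" using nn_ge[of x0] by auto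
  have "S \<noteq> {}" using nz[OF x0pos] by auto
  then obtain v where vS: "v \<in> S" and vmax: "\<And>y. y \<in> S \<Longrightarrow> qf y \<le> qf v"
    using continuous_attains_sup[OF cS _ cont_qf] by blast
  define \<mu> where "\<mu> = qf v"
  have bound: "qf y \<le> \<mu> * nn y" for y
  proof (cases "nn y = 0")
    case True then show ?thesis using qf0 by simp
  next
    case False
    then have p: "nn y > 0" using nn_ge[of y] by auto
    from nz[OF p] vmax have "qf y / nn y \<le> \<mu>" unfolding \<mu>_def by metis
    then show ?thesis using p by (simp add: field_simps)
  qed
  have "qf x0 / nn x0 \<le> \<mu>" using nz[OF x0pos] vmax unfolding \<mu>_def by metis
  moreover have "c < qf x0 / nn x0" using gt x0pos unfolding qf_def nn_def by (simp add: field_simps)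
  ultimately have muc: "\<mu> > c" by linarith
  have nv: "nn v = 1" using vS unfolding S_def by auto
  define r where "r i = (\<Sum>j<n. a i j * v j) - \<mu> * v i" for i
  define B where "B = (\<Sum>i<n. r i * (\<Sum>j<n. a i j * v j))"
  define P where "P = (\<Sum>i<n. v i * r i)"
  have BP: "B - \<mu> * P = nn r"
    unfolding B_def P_def nn_def r_def
    by (simp add: sum_subtractf[symmetric] sum_distrib_left power2_eq_square algebra_simps)
  have ineq: "2 * t * nn r + t^2 * (qf r - \<mu> * nn r) \<le> 0" for t
  proof -
    have "qf (\<lambda>i. v i + t * r i) \<le> \<mu> * nn (\<lambda>i. v i + t * r i)" by (rule bound)
    then have "qf v + 2 * t * B + t^2 * qf r \<le> \<mu> * (nn v + 2 * t * P + t^2 * nn r)"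
      unfolding qf_def nn_def B_def P_def
      by (simp only: qf_expand[OF sym] nn_expand)
    then show ?thesis using BP nv unfolding \<mu>_def by (simp add: algebra_simps)
  qed
  have "nn r = 0"
  proof (rule ccontr)
    assume "nn r \<noteq> 0"
    then have R: "nn r > 0" using nn_ge[of r] by auto
    define Kc where "Kc = qf r - \<mu> * nn r"
    define t where "t = nn r / (\<bar>Kc\<bar> + 1)"
    have tpos: "t > 0" unfolding t_def using R by auto
    have "t * \<bar>Kc\<bar> < nn r" unfolding t_def using R
      by (simp add: field_simps)
    moreover have "t * Kc \<ge> - (t * \<bar>Kc\<bar>)" using mult_left_mono[of "-\<bar>Kc\<bar>" Kc t] tpos by simp
    ultimately have h0: "t * Kc > - nn r" by linarith
    have h3: "t * (t * Kc) \<ge> t * (- nn r)" using h0 tpos by (intro mult_left_mono) auto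
    have e: "t^2 * Kc = t * (t * Kc)" by (simp add: power2_eq_square)
    have "2 * t * nn r + t^2 * Kc \<ge> t * nn r" unfolding e using h3 by linarith
    moreover have "t * nn r > 0" using tpos R by simp
    ultimately have "2 * t * nn r + t^2 * Kc > 0" by linarith
    then show False using ineq[of t] unfolding Kc_def by linarith
  qed
  then have "\<forall>i<n. r i = 0" using nn_zero unfolding nn_def by blast
  then have "\<forall>i<n. (\<Sum>j<n. a i j * v j) = \<mu> * v i" unfolding r_def by auto
  moreover have "\<exists>i<n. v i \<noteq> 0"
  proof (rule ccontr)
    assume "\<not> (\<exists>i<n. v i \<noteq> 0)"
    then have "nn v = 0" unfolding nn_def by (intro sum.neutral) auto
    then show False using nv by simp
  qed
  ultimately show ?thesis using muc by blast
qed



definition hm :: "nat \<Rightarrow> nat \<Rightarrow> nat \<Rightarrow> real" where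
  "hm n j k = (if j = k then 2 * cos (2 * pi * real j / real n)
     else if j + 1 = k \<or> k + 1 = j \<or> (j = 0 \<and> k = n - 1) \<or> (j = n - 1 \<and> k = 0) then 1
     else 0)"
definition sc :: "nat \<Rightarrow> nat \<Rightarrow> nat" where "sc n i = (i + 1) mod n"
definition pr :: "nat \<Rightarrow> nat \<Rightarrow> nat" where "pr n i = (i + n - 1) mod n"

lemma heis_index: "i < n \<Longrightarrow> j < n \<Longrightarrow> heis_mat n $$ (i, j) = hm n i j"
  unfolding heis_mat_def hm_def by simp

lemma heis_carrier: "heis_mat n \<in> carrier_mat n n"
  unfolding heis_mat_def by simp

lemma hm_sym: "hm n i j = hm n j i"
  unfolding hm_def by auto


lemma sc_lt: "i < n - 1 \<Longrightarrow> sc n i = i + 1" unfolding sc_def by simp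
lemma sc_last: "0 < n \<Longrightarrow> sc n (n - 1) = 0" unfolding sc_def by simp
lemma pr_pos: "0 < i \<Longrightarrow> i < n \<Longrightarrow> pr n i = i - 1"
  by (cases i) (auto simp: pr_def)
lemma pr_0: "0 < n \<Longrightarrow> pr n 0 = n - 1" unfolding pr_def by simp
lemma sc_less: "0 < n \<Longrightarrow> sc n i < n" unfolding sc_def by simp
lemma pr_sc: "i < n \<Longrightarrow> pr n (sc n i) = i"
proof -
  assume i: "i < n"
  show ?thesis
  proof (cases "i = n - 1")
    case True then show ?thesis using i sc_last pr_0 by auto
  next
    case False then show ?thesis using i sc_lt pr_pos by auto
  qed
qed

lemma sum_sc: "0 < n \<Longrightarrow> (\<Sum>i<n. f (sc n i)) = (\<Sum>i<n. f i)"
proof -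
  assume "0 < n"
  then obtain m where n: "n = Suc m" by (cases n) auto
  have "(\<Sum>i<Suc m. f (sc (Suc m) i)) = (\<Sum>i<m. f (sc (Suc m) i)) + f (sc (Suc m) m)"
    by simp
  also have "(\<Sum>i<m. f (sc (Suc m) i)) = (\<Sum>i<m. f (Suc i))"
    by (intro sum.cong) (auto simp: sc_def)
  also have "sc (Suc m) m = 0" by (simp add: sc_def)
  also have "(\<Sum>i<m. f (Suc i)) + f 0 = (\<Sum>i<Suc m. f i)"
    by (subst sum.lessThan_Suc_shift) (simp add: add.commute)
  finally show ?thesis using n by simp
qed

lemma hm_split:
  assumes n: "3 \<le> n" and i: "i < n" and j: "j < n"
  shows "hm n i j = (if j = i then 2 * cos (2 * pi * real i / real n) else 0)
     + (if j = sc n i then 1 else 0) + (if j = pr n i then 1 else 0)"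
proof -
  have s: "sc n i = (if i = n - 1 then 0 else i + 1)" using sc_lt sc_last i by auto
  have p: "pr n i = (if i = 0 then n - 1 else i - 1)" using pr_pos pr_0 i by auto
  show ?thesis unfolding hm_def s p using n i j by auto
qed

lemma row_sum:
  assumes n: "3 \<le> n" and i: "i < n"
  shows "(\<Sum>j<n. hm n i j * x j) = 2 * cos (2 * pi * real i / real n) * x i + x (sc n i) + x (pr n i)"
proof -
  have "(\<Sum>j<n. hm n i j * x j) = (\<Sum>j<n. (if j = i then 2 * cos (2 * pi * real i / real n) * x i else 0)
     + (if j = sc n i then x (sc n i) else 0) + (if j = pr n i then x (pr n i) else 0))"
    by (intro sum.cong) (auto simp: hm_split[OF n i] algebra_simps)
  also have "\<dots> = 2 * cos (2 * pi * real i / real n) * x i + x (sc n i) + x (pr n i)"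
    using i n sc_less[of n i] by (simp add: sum.distrib pr_def)
  finally show ?thesis .
qed

lemma qform:
  assumes n: "3 \<le> n"
  shows "(\<Sum>i<n. x i * (\<Sum>j<n. hm n i j * x j)) =
    2 * (\<Sum>i<n. cos (2 * pi * real i / real n) * (x i)^2) + 2 * (\<Sum>i<n. x i * x (sc n i))"
proof -
  have h1: "(\<Sum>i<n. x i * (\<Sum>j<n. hm n i j * x j)) =
     (\<Sum>i<n. 2 * (cos (2 * pi * real i / real n) * (x i)^2) + x i * x (sc n i) + x i * x (pr n i))"
  proof (intro sum.cong refl)
    fix i assume "i \<in> {..<n}"
    then show "x i * (\<Sum>j<n. hm n i j * x j) = 2 * (cos (2 * pi * real i / real n) * (x i)^2) + x i * x (sc n i) + x i * x (pr n i)"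
      using row_sum[OF n, of i x] by (simp add: algebra_simps power2_eq_square)
  qed
  have h2: "(\<Sum>i<n. x i * x (pr n i)) = (\<Sum>i<n. x (sc n i) * x (pr n (sc n i)))"
    using sum_sc[of n "\<lambda>i. x i * x (pr n i)"] n by simp
  also have "\<dots> = (\<Sum>i<n. x i * x (sc n i))" by (intro sum.cong) (auto simp: pr_sc)
  finally show ?thesis using h1 by (simp add: sum.distrib sum_distrib_left)
qed



lemma cos_lower: "1 - x^2 / 2 \<le> cos (x::real)"
proof -
  have "cos x = cos (2 * (x/2))" by simp
  also have "\<dots> = 1 - 2 * sin (x/2) ^ 2" by (rule cos_double_sin)
  finally have c: "cos x = 1 - 2 * sin (x/2) ^ 2" .
  have "\<bar>sin (x/2)\<bar> \<le> \<bar>x/2\<bar>" by (rule abs_sin_x_le_abs_x)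
  then have "sin (x/2) ^ 2 \<le> (x/2)^2"
    by (metis abs_ge_zero power2_abs power_mono)
  then show ?thesis using c by (simp add: power_divide)
qed

lemma sin_lower:
  fixes x :: real assumes "0 \<le> x" shows "x - x^3 / 6 \<le> sin x"
proof -
  let ?f = "\<lambda>x. sin x - x + x^3 / 6"
  have "?f 0 \<le> ?f x"
  proof (rule DERIV_nonneg_imp_nondecreasing[OF assms])
    fix u :: real assume "0 \<le> u" "u \<le> x"
    have "DERIV ?f u :> cos u - 1 + u^2 / 2"
      by (auto intro!: derivative_eq_intros simp: field_simps power2_eq_square)
    moreover have "cos u - 1 + u^2 / 2 \<ge> 0" using cos_lower[of u] by simp
    ultimately show "\<exists>y. DERIV ?f u :> y \<and> y \<ge> 0" by blast
  qed
  then show ?thesis by simp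
qed

lemma s_bounds:
  assumes n: "10 \<le> n"
  shows "1.5 / real n \<le> sin (pi / real n)" "sin (pi / real n) \<le> 4 / real n"
proof -
  have np: "real n \<ge> 10" using n by simp
  have x0: "0 \<le> pi / real n" by simp
  have "pi / real n \<le> 4 / 10" using pi_less_4 np by (simp add: field_simps)
  then have xs0: "(pi / real n)^2 \<le> (4/10)^2" using x0 by (intro power_mono) auto
  have xs: "(pi / real n)^2 \<le> 16/100" using xs0 by (simp add: power2_eq_square)
  have "pi / real n - (pi / real n)^3 / 6 = (pi / real n) * (1 - (pi / real n)^2 / 6)"
    by (simp add: power3_eq_cube power2_eq_square algebra_simps)
  also have "\<dots> \<ge> (2 / real n) * (3/4)"
  proof (rule mult_mono)
    show "2 / real n \<le> pi / real n" using pi_ge_two np by (simp add: divide_right_mono)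
    show "3/4 \<le> 1 - (pi / real n)^2 / 6" using xs by linarith
  qed (use x0 in auto)
  finally have "(2 / real n) * (3/4) \<le> sin (pi / real n)" using sin_lower[OF x0] by linarith
  then show "1.5 / real n \<le> sin (pi / real n)" by simp
  have "sin (pi / real n) \<le> pi / real n" by (rule sin_x_le_x[OF x0])
  also have "\<dots> \<le> 4 / real n" using pi_less_4 np by (simp add: divide_right_mono)
  finally show "sin (pi / real n) \<le> 4 / real n" .
qed

lemma arg_p: "(2 * real i + 1) * pi / real n = 2 * pi * real i / real n + pi / real n"
  by (simp add: add_divide_distrib algebra_simps)
lemma arg_m: "(2 * real i - 1) * pi / real n = 2 * pi * real i / real n - pi / real n"
  by (simp add: diff_divide_distrib algebra_simps)

lemma trig_diff: "sin ((2 * real i + 1) * pi / real n) - sin ((2 * real i - 1) * pi / real n)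
   = 2 * cos (2 * pi * real i / real n) * sin (pi / real n)"
  unfolding arg_p arg_m by (simp add: sin_add sin_diff)

lemma trig_sq: fixes a h :: real shows "(sin (a + h))^2 + (sin (a - h))^2 \<le> 4 * (1 - cos a) + 2 * (sin h)^2"
proof -
  have e: "(sin (a+h))^2 + (sin (a-h))^2 = 2*(sin a)^2*(cos h)^2 + 2*(cos a)^2*(sin h)^2"
    by (simp add: sin_add sin_diff power2_eq_square algebra_simps)
  have ch: "(cos h)^2 \<le> 1" and ca: "(cos a)^2 \<le> 1" by (simp_all add: cos_squared_eq)
  have "(sin a)^2*(cos h)^2 \<le> (sin a)^2" using mult_left_mono[OF ch, of "(sin a)^2"] by simp
  moreover have "(cos a)^2*(sin h)^2 \<le> (sin h)^2" using mult_right_mono[OF ca, of "(sin h)^2"] by simp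
  moreover have "(sin a)^2 \<le> 2 * (1 - cos a)"
  proof -
    have f1: "(sin a)^2 + (cos a)^2 = 1" by simp
    have f2: "(1 - cos a)^2 = 1 - 2 * cos a + (cos a)^2" by (simp add: power2_diff)
    have f3: "0 \<le> (1 - cos a)^2" by simp
    have gen: "S + C2 = 1 \<Longrightarrow> 0 \<le> 1 - 2 * c + C2 \<Longrightarrow> S \<le> 2 * (1 - c)" for S C2 c :: real by (simp add: algebra_simps)
    show ?thesis using f1 f3[unfolded f2] by (rule gen)
  qed
  ultimately show ?thesis using e by linarith
qed

lemma term_ineq:
  fixes g a b :: real
  shows "g * (a^2 - b^2) \<le> (g^2 * (a^2 + b^2)) / 2 + (a - b)^2"
proof -
  have "2 * (g^2 * (a^2 + b^2)) + 4 * (a - b)^2 - 4 * (g * (a^2 - b^2)) = (g*(a+b) - 2*(a-b))^2 + (g*(a-b))^2"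
    by (simp add: power2_eq_square algebra_simps)
  moreover have "0 \<le> (g*(a+b) - 2*(a-b))^2 + (g*(a-b))^2" by simp
  ultimately show ?thesis by linarith
qed

lemma gG:
  assumes "i < n"
  shows "sin ((2 * real i + 1) * pi / real n) = sin ((2 * real (sc n i) - 1) * pi / real n)"
proof (cases "i = n - 1")
  case True
  then have n0: "0 < n" and sc0: "sc n i = 0" using assms sc_last by auto
  have ri: "real i = real n - 1" using True n0 by (simp add: of_nat_diff)
  have "(2 * real i + 1) * pi / real n = (- pi / real n) + 2 * pi"
    using n0 unfolding ri by (simp add: field_simps)
  then show ?thesis using sc0 by simp
next
  case False
  then have "sc n i = i + 1" using assms sc_lt by auto
  then show ?thesis by (simp add: algebra_simps)
qed

lemma upper:
  fixes x :: "nat \<Rightarrow> real"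
  assumes n: "10 \<le> n" and Npos: "(\<Sum>i<n. (x i)^2) > 0"
  shows "(\<Sum>i<n. x i * (\<Sum>j<n. hm n i j * x j)) < (4 - 2 / real n) * (\<Sum>i<n. (x i)^2)"
proof -
  define N where "N = (\<Sum>i<n. (x i)^2)"
  define c where "c i = cos (2 * pi * real i / real n)" for i
  define s where "s = sin (pi / real n)"
  define g where "g i = sin ((2 * real i + 1) * pi / real n)" for i
  define G where "G i = sin ((2 * real i - 1) * pi / real n)" for i
  define C where "C = (\<Sum>i<n. c i * (x i)^2)"
  define P where "P = (\<Sum>i<n. x i * x (sc n i))"
  define D where "D = (\<Sum>i<n. (x i - x (sc n i))^2)"
  have n3: "3 \<le> n" and n0: "0 < n" using n by auto
  have Q: "(\<Sum>i<n. x i * (\<Sum>j<n. hm n i j * x j)) = 2 * C + 2 * P"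
    unfolding C_def P_def c_def using qform[OF n3] by simp
  have Nsc: "(\<Sum>i<n. (x (sc n i))^2) = N" unfolding N_def by (rule sum_sc[OF n0])
  have "D = (\<Sum>i<n. (x i)^2) + (\<Sum>i<n. (x (sc n i))^2) - 2 * P" unfolding D_def P_def
    by (simp add: power2_diff sum.distrib sum_subtractf sum_distrib_left algebra_simps)
  then have DP: "D = 2 * N - 2 * P" using Nsc unfolding N_def by simp
  have Dnn: "D \<ge> 0" unfolding D_def by (intro sum_nonneg) auto
  have CN: "C \<le> N" unfolding C_def N_def
  proof (intro sum_mono)
    fix i show "c i * (x i)^2 \<le> (x i)^2" using mult_right_mono[of "c i" 1 "(x i)^2"] by (simp add: c_def)
  qed
  have L1: "(\<Sum>i<n. g i * (x (sc n i))^2) = (\<Sum>i<n. G i * (x i)^2)"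
  proof -
    have "(\<Sum>i<n. g i * (x (sc n i))^2) = (\<Sum>i<n. G (sc n i) * (x (sc n i))^2)"
      by (intro sum.cong) (auto simp: g_def G_def gG)
    also have "\<dots> = (\<Sum>i<n. G i * (x i)^2)" by (rule sum_sc[OF n0])
    finally show ?thesis .
  qed
  have L2: "(\<Sum>i<n. (g i)^2 * (x (sc n i))^2) = (\<Sum>i<n. (G i)^2 * (x i)^2)"
  proof -
    have "(\<Sum>i<n. (g i)^2 * (x (sc n i))^2) = (\<Sum>i<n. (G (sc n i))^2 * (x (sc n i))^2)"
      by (intro sum.cong) (auto simp: g_def G_def gG)
    also have "\<dots> = (\<Sum>i<n. (G i)^2 * (x i)^2)" by (rule sum_sc[OF n0])
    finally show ?thesis .
  qed
  have LHS: "(\<Sum>i<n. g i * ((x i)^2 - (x (sc n i))^2)) = 2 * s * C"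
  proof -
    have "(\<Sum>i<n. g i * ((x i)^2 - (x (sc n i))^2)) = (\<Sum>i<n. g i * (x i)^2) - (\<Sum>i<n. g i * (x (sc n i))^2)"
      by (simp add: right_diff_distrib sum_subtractf)
    also have "\<dots> = (\<Sum>i<n. (g i - G i) * (x i)^2)" unfolding L1
      by (simp add: left_diff_distrib sum_subtractf)
    also have "\<dots> = (\<Sum>i<n. 2 * s * (c i * (x i)^2))"
      by (intro sum.cong) (auto simp: g_def G_def trig_diff c_def s_def)
    also have "\<dots> = 2 * s * C" unfolding C_def by (simp add: sum_distrib_left)
    finally show ?thesis .
  qed
  have RHS: "(\<Sum>i<n. (g i)^2 * ((x i)^2 + (x (sc n i))^2) / 2 + (x i - x (sc n i))^2)
      = (\<Sum>i<n. ((g i)^2 + (G i)^2) / 2 * (x i)^2) + D"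
  proof -
    have "(\<Sum>i<n. (g i)^2 * ((x i)^2 + (x (sc n i))^2) / 2 + (x i - x (sc n i))^2)
       = ((\<Sum>i<n. (g i)^2 * (x i)^2) + (\<Sum>i<n. (g i)^2 * (x (sc n i))^2)) / 2 + D"
      unfolding D_def by (simp add: sum.distrib distrib_left sum_divide_distrib add_divide_distrib)
    also have "\<dots> = (\<Sum>i<n. ((g i)^2 + (G i)^2) / 2 * (x i)^2) + D" unfolding L2
      by (simp add: sum.distrib[symmetric] sum_divide_distrib algebra_simps add_divide_distrib)
    finally show ?thesis .
  qed
  have RB: "(\<Sum>i<n. ((g i)^2 + (G i)^2) / 2 * (x i)^2) \<le> (\<Sum>i<n. (2 * (1 - c i) + s^2) * (x i)^2)"
  proof (intro sum_mono mult_right_mono)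
    fix i
    show "((g i)^2 + (G i)^2) / 2 \<le> 2 * (1 - c i) + s^2"
      using trig_sq[of "2 * pi * real i / real n" "pi / real n"]
      unfolding g_def G_def c_def s_def arg_p arg_m by simp
  qed simp
  have RV: "(\<Sum>i<n. (2 * (1 - c i) + s^2) * (x i)^2) = 2 * N - 2 * C + s^2 * N"
    unfolding N_def C_def by (simp add: sum.distrib sum_subtractf sum_distrib_left algebra_simps)
  have "(\<Sum>i<n. g i * ((x i)^2 - (x (sc n i))^2)) \<le> (\<Sum>i<n. (g i)^2 * ((x i)^2 + (x (sc n i))^2) / 2 + (x i - x (sc n i))^2)"
    by (intro sum_mono term_ineq)
  then have key: "2 * s * C \<le> 2 * N - 2 * C + s^2 * N + D"
    unfolding LHS RHS using RB RV by linarith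
  have sb: "1.5 / real n \<le> s" "s \<le> 4 / real n" using s_bounds[OF n] unfolding s_def by auto
  have s0: "s \<ge> 0" using sb by (smt (verit) divide_nonneg_nonneg of_nat_0_le_iff)
  have Np: "N > 0" using Npos unfolding N_def .
  have nr: "real n \<ge> 10" using n by simp
  show ?thesis
  proof (rule ccontr)
    assume "\<not> ?thesis"
    then have h: "2 * C + 2 * P \<ge> (4 - 2 / real n) * N" unfolding Q N_def by simp
    define E where "E = 2 * N - 2 * C + D"
    have E: "E \<le> 2 * N / real n" using h DP unfolding E_def by (simp add: algebra_simps)
    have sW: "s * (2 * N - 2 * C) \<le> s * E" unfolding E_def using s0 Dnn by (intro mult_left_mono) auto
    have "2 * s * N \<le> E + s * E + s^2 * N" using key sW unfolding E_def by (simp add: algebra_simps)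
    also have "\<dots> \<le> 2 * N / real n + s * (2 * N / real n) + s^2 * N"
      using E s0 mult_left_mono[OF E s0] by linarith
    finally have "2 * s * N \<le> (2 / real n + s * (2 / real n) + s^2) * N" by (simp add: algebra_simps)
    then have h2: "2 * s \<le> 2 / real n + s * (2 / real n) + s^2" using Np by simp
    have "2 * s * real n \<le> 2 + 2 * s + s * (s * real n)"
      using mult_right_mono[OF h2, of "real n"] nr by (simp add: algebra_simps power2_eq_square)
    moreover have "s * real n \<le> 4" using sb nr by (simp add: field_simps)
    moreover have "s * real n \<ge> 1.5" using sb nr by (simp add: field_simps)
    ultimately have "2 * s * real n \<le> 2 + 6 * s" using s0 mult_left_mono[of "s * real n" 4 s] by linarith
    then have "s * (2 * real n - 6) \<le> 2" by (simp add: algebra_simps)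
    moreover have "s * (2 * real n - 6) \<ge> (1.5 / real n) * (2 * real n - 6)"
      using sb nr by (intro mult_right_mono) auto
    moreover have "(1.5 / real n) * (2 * real n - 6) = 3 - 9 / real n" using nr by (simp add: field_simps)
    moreover have "9 / real n < 1" using nr by simp
    ultimately show False by linarith
  qed
qed



lemma qfull:
  fixes x :: "nat \<Rightarrow> real"
  assumes n3: "3 \<le> n"
  shows "(\<Sum>i<n. x i * (\<Sum>j<n. hm n i j * x j)) = 4 * (\<Sum>i<n. (x i)^2)
     - (\<Sum>i<n. (2 - 2 * cos (2 * pi * real i / real n)) * (x i)^2) - (\<Sum>i<n. (x i - x (sc n i))^2)"
proof -
  have n0: "0 < n" using n3 by auto
  have Nsc: "(\<Sum>i<n. (x (sc n i))^2) = (\<Sum>i<n. (x i)^2)" by (rule sum_sc[OF n0])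
  have "(\<Sum>i<n. (x i - x (sc n i))^2) = (\<Sum>i<n. (x i)^2) + (\<Sum>i<n. (x (sc n i))^2) - 2 * (\<Sum>i<n. x i * x (sc n i))"
    by (simp add: power2_diff sum.distrib sum_subtractf sum_distrib_left algebra_simps)
  then have D: "(\<Sum>i<n. (x i - x (sc n i))^2) = 2 * (\<Sum>i<n. (x i)^2) - 2 * (\<Sum>i<n. x i * x (sc n i))"
    using Nsc by simp
  have W: "(\<Sum>i<n. (2 - 2 * cos (2 * pi * real i / real n)) * (x i)^2) = 2 * (\<Sum>i<n. (x i)^2) - 2 * (\<Sum>i<n. cos (2 * pi * real i / real n) * (x i)^2)"
    by (simp add: sum_subtractf sum_distrib_left left_diff_distrib mult.assoc)
  show ?thesis unfolding qform[OF n3] D W by simp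
qed

lemma sum_sq_lower: "(\<Sum>i<L. (real (Suc i))^2) \<ge> real L ^ 3 / 3"
proof (induction L)
  case 0 then show ?case by simp
next
  case (Suc L)
  have "real (Suc L) ^ 3 / 3 = real L ^ 3 / 3 + (real L ^ 2 + real L + 1/3)"
    by (simp add: power3_eq_cube power2_eq_square algebra_simps)
  also have "\<dots> \<le> (\<Sum>i<L. (real (Suc i))^2) + (real (Suc L))^2"
    using Suc.IH by (simp add: power2_eq_square algebra_simps)
  finally show ?case by simp
qed

lemma cos_sym: "i < n \<Longrightarrow> cos (2 * pi * real i / real n) = cos (2 * pi * real (min i (n - i)) / real n)"
proof (cases "i \<le> n - i")
  case True then show ?thesis by (simp add: min_def)
next
  case False
  assume i: "i < n"
  then have n0: "real n > 0" by simp
  have m: "min i (n - i) = n - i" using False by (simp add: min_def)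
  have "2 * pi * real (n - i) / real n = 2 * pi - 2 * pi * real i / real n"
    using i n0 by (simp add: of_nat_diff field_simps)
  then show ?thesis unfolding m by (simp add: cos_diff)
qed

lemma lower:
  assumes n: "100 \<le> n"
  shows "\<exists>x. (\<Sum>i<n. x i * (\<Sum>j<n. hm n i j * x j)) > (4 - 40 / real n) * (\<Sum>i<n. (x i)^2)"
proof -
  define L where "L = nat \<lfloor>sqrt (real n)\<rfloor>"
  have sq: "sqrt (real n) \<ge> 10"
    using n real_sqrt_le_mono[of 100 "real n"] by simp
  have fl0: "\<lfloor>sqrt (real n)\<rfloor> \<ge> 0" using sq by simp
  have rL: "real L = of_int \<lfloor>sqrt (real n)\<rfloor>" unfolding L_def using fl0 by simp
  have L1: "real L \<le> sqrt (real n)" unfolding rL by simp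
  have L2: "sqrt (real n) < real L + 1" unfolding rL by linarith
  have "(10::int) \<le> \<lfloor>sqrt (real n)\<rfloor>" using sq by (simp add: le_floor_iff)
  then have L10: "real L \<ge> 10" unfolding rL by linarith
  have Lsq: "(real L)^2 \<le> real n"
    using power_mono[OF L1, of 2] by simp
  have nlt: "real n < (real L + 1)^2"
    using power_strict_mono[OF L2, of 2] by simp
  define l where "l = real L"
  define m where "m = real n"
  have l10: "l \<ge> 10" and lsq: "l^2 \<le> m" and mlt: "m < (l+1)^2" and m100: "m \<ge> 100"
    using L10 Lsq nlt n unfolding l_def m_def by auto
  have ll: "l * l \<ge> 10 * l" using mult_right_mono[OF l10, of l] l10 by simp
  have m3: "3 * m < 4 * l^2"
  proof -
    have e1: "(l+1)^2 = l*l + 2*l + 1" by (simp add: power2_eq_square algebra_simps)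
    have e2: "l^2 = l * l" by (simp add: power2_eq_square)
    have "3 * (l+1)^2 \<le> 4 * l^2" unfolding e1 e2 using l10 ll by (smt (verit))
    then show ?thesis using mlt by linarith
  qed
  have L2n: "2 * L \<le> n"
  proof -
    have "2 * l \<le> l^2" using l10 ll by (simp add: power2_eq_square)
    then have "2 * l \<le> m" using lsq by linarith
    then have "real (2 * L) \<le> real n" unfolding l_def m_def by simp
    then show ?thesis by linarith
  qed
  define d where "d i = min i (n - i)" for i
  define x where "x i = real (L - d i)" for i
  define \<psi> where "\<psi> i = (if d i < L then 1 else 0::real)" for i
  have n3: "3 \<le> n" and n0: "0 < n" using n by auto
  have psi_le: "\<psi> i \<le> (if i < L then 1 else 0) + (if n - L < i then 1 else 0)" if "i < n" for i
    unfolding \<psi>_def d_def using that by auto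
  have cnt1: "(\<Sum>i<n. (if i < L then 1 else 0::real)) = real L"
  proof -
    have "{..<n} \<inter> {i. i < L} = {..<L}" using L2n by auto
    then show ?thesis by (simp add: sum.If_cases)
  qed
  have cnt2: "(\<Sum>i<n. (if n - L < i then 1 else 0::real)) \<le> real L"
  proof -
    have "{..<n} \<inter> {i. n - L < i} = {n - L<..<n}" by auto
    then have "(\<Sum>i<n. (if n - L < i then 1 else 0::real)) = real (card {n - L<..<n})"
      by (simp add: sum.If_cases)
    also have "card {n - L<..<n} \<le> L" by simp
    finally show ?thesis by simp
  qed
  have psi_sum: "(\<Sum>i<n. \<psi> i) \<le> 2 * real L"
  proof -
    have "(\<Sum>i<n. \<psi> i) \<le> (\<Sum>i<n. (if i < L then 1 else 0) + (if n - L < i then 1 else 0::real))"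
      by (intro sum_mono psi_le) auto
    also have "\<dots> \<le> 2 * real L" using cnt1 cnt2 by (simp add: sum.distrib)
    finally show ?thesis .
  qed
  have dstep: "d i \<le> d (sc n i) + 1 \<and> d (sc n i) \<le> d i + 1" if i: "i < n" for i
  proof (cases "i = n - 1")
    case True
    then show ?thesis using sc_last[OF n0] n unfolding d_def by auto
  next
    case False
    then have "sc n i = i + 1" using i sc_lt by auto
    then show ?thesis unfolding d_def using i False by auto
  qed
  have Dterm: "(x i - x (sc n i))^2 \<le> \<psi> i + \<psi> (sc n i)" if i: "i < n" for i
  proof (cases "d i < L \<or> d (sc n i) < L")
    case True
    have "L - d i \<le> (L - d (sc n i)) + 1 \<and> L - d (sc n i) \<le> (L - d i) + 1" using dstep[OF i] by auto
    then have "\<bar>x i - x (sc n i)\<bar> \<le> 1" unfolding x_def by linarith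
    then have "(x i - x (sc n i))^2 \<le> 1" by (simp add: abs_square_le_1)
    moreover have "\<psi> i + \<psi> (sc n i) \<ge> 1" using True unfolding \<psi>_def by auto
    ultimately show ?thesis by linarith
  next
    case False
    then have "x i = 0" "x (sc n i) = 0" unfolding x_def by auto
    then show ?thesis unfolding \<psi>_def by simp
  qed
  have Dsum: "(\<Sum>i<n. (x i - x (sc n i))^2) \<le> 4 * l"
  proof -
    have "(\<Sum>i<n. (x i - x (sc n i))^2) \<le> (\<Sum>i<n. \<psi> i + \<psi> (sc n i))"
      by (intro sum_mono Dterm) auto
    also have "\<dots> = 2 * (\<Sum>i<n. \<psi> i)" using sum_sc[OF n0, of \<psi>] by (simp add: sum.distrib)
    finally show ?thesis using psi_sum unfolding l_def by linarith
  qed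
  have Wterm: "(2 - 2 * cos (2 * pi * real i / real n)) * (x i)^2 \<le> \<psi> i * (4 * l^4 / m^2)" if i: "i < n" for i
  proof (cases "d i < L")
    case False
    then show ?thesis unfolding x_def \<psi>_def by simp
  next
    case True
    define k where "k = real (d i)"
    have xk: "x i = l - k" unfolding x_def k_def l_def using True by (simp add: of_nat_diff)
    have k0: "0 \<le> k" and kl: "k \<le> l" unfolding k_def l_def using True by auto
    have c: "cos (2 * pi * real i / real n) = cos (2 * pi * k / m)"
      unfolding k_def m_def d_def using cos_sym[OF i] by simp
    have c1: "2 - 2 * cos (2 * pi * k / m) \<le> (2 * pi * k / m)^2"
      using cos_lower[of "2 * pi * k / m"] by simp
    have prod: "(k * (l - k))^2 \<le> (l^2 / 4)^2"
    proof (rule power_mono)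
      have e: "(l - 2*k)^2 = l^2 - 4 * (k * (l - k))" by (simp add: power2_eq_square algebra_simps)
      have "0 \<le> (l - 2*k)^2" by simp
      have gen: "0 \<le> A - 4*B \<Longrightarrow> B \<le> A/4" for A B :: real by linarith
      have h: "0 \<le> l^2 - 4 * (k * (l - k))" using \<open>0 \<le> (l - 2*k)^2\<close> unfolding e .
      show "k * (l - k) \<le> l^2 / 4" by (rule gen[OF h])
      show "0 \<le> k * (l - k)" using k0 kl by simp
    qed
    have pi16: "pi^2 \<le> 16" using power_mono[OF less_imp_le[OF pi_less_4] pi_ge_zero, of 2] by simp
    have "(2 - 2 * cos (2 * pi * k / m)) * (l - k)^2 \<le> (2 * pi * k / m)^2 * (l - k)^2"
      using c1 by (intro mult_right_mono) auto
    also have "\<dots> = (4 * pi^2 / m^2) * (k * (l - k))^2" by (simp add: power_mult_distrib power_divide mult_ac)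
    also have "\<dots> \<le> (4 * pi^2 / m^2) * (l^2 / 4)^2" using prod by (intro mult_left_mono) auto
    also have "\<dots> = pi^2 * l^4 / (4 * m^2)" by (simp add: power_divide power2_eq_square power4_eq_xxxx algebra_simps)
    also have "\<dots> \<le> 16 * l^4 / (4 * m^2)" using pi16 by (intro divide_right_mono mult_right_mono) auto
    also have "\<dots> = 4 * l^4 / m^2" by simp
    finally show ?thesis unfolding c xk \<psi>_def using True by simp
  qed
  have Wsum: "(\<Sum>i<n. (2 - 2 * cos (2 * pi * real i / real n)) * (x i)^2) \<le> 8 * l^5 / m^2"
  proof -
    have "(\<Sum>i<n. (2 - 2 * cos (2 * pi * real i / real n)) * (x i)^2) \<le> (\<Sum>i<n. \<psi> i * (4 * l^4 / m^2))"
      by (intro sum_mono Wterm) auto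
    also have "\<dots> = (\<Sum>i<n. \<psi> i) * (4 * l^4 / m^2)" by (rule sum_distrib_right[symmetric])
    also have "\<dots> \<le> (2 * l) * (4 * l^4 / m^2)" using psi_sum unfolding l_def by (intro mult_right_mono) auto
    also have "\<dots> = 8 * l^5 / m^2" by (simp add: numeral_eq_Suc algebra_simps) 
    finally show ?thesis .
  qed
  have Nlow: "(\<Sum>i<n. (x i)^2) \<ge> l^3 / 3"
  proof -
    have "(\<Sum>i<L. (x i)^2) \<le> (\<Sum>i<n. (x i)^2)"
      using L2n by (intro sum_mono2) auto
    moreover have "(\<Sum>i<L. (x i)^2) = (\<Sum>i<L. (real (Suc (L - Suc i)))^2)"
    proof (intro sum.cong refl)
      fix i assume "i \<in> {..<L}"
      then have "i < L" by simp
      then have "d i = i" unfolding d_def using L2n by auto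
      then show "(x i)^2 = (real (Suc (L - Suc i)))^2" unfolding x_def using \<open>i < L\<close> by (simp add: Suc_diff_Suc)
    qed
    moreover have "(\<Sum>i<L. (real (Suc (L - Suc i)))^2) = (\<Sum>i<L. (real (Suc i))^2)"
      by (rule sum.nat_diff_reindex)
    ultimately show ?thesis using sum_sq_lower[of L] unfolding l_def by linarith
  qed
  have fin: "8 * l^5 / m^2 + 4 * l < 40 / m * (l^3 / 3)"
  proof -
    have m0: "m > 0" and l0: "l > 0" using m100 l10 by auto
    have l2: "l^2 \<ge> 0" by simp
    have a0: "l^2 * l^2 \<le> l^2 * m" by (rule mult_left_mono[OF lsq l2])
    have p4: "l^4 = l^2 * l^2" by (simp add: power2_eq_square power4_eq_xxxx)
    have a: "24 * l^4 \<le> 24 * l^2 * m" using a0 unfolding p4 by simp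
    have b0: "3 * m * m < 4 * l^2 * m" by (rule mult_strict_right_mono[OF m3 m0])
    have pm: "m^2 = m * m" by (simp add: power2_eq_square)
    have b: "12 * m^2 < 16 * l^2 * m" using b0 unfolding pm by (simp add: mult_ac)
    have main: "24 * l^4 + 12 * m^2 < 40 * l^2 * m" using a b by linarith
    have main2: "l * (24 * l^4 + 12 * m^2) < l * (40 * l^2 * m)" by (rule mult_strict_left_mono[OF main l0])
    have m2: "3 * m^2 > 0" using m0 by simp
    have p5: "l^5 = l * (l * (l * (l * l)))" by (simp add: numeral_eq_Suc)
    have e1: "8 * l^5 / m^2 + 4 * l = l * (24 * l^4 + 12 * m^2) / (3 * m^2)"
      using m0 by (simp add: field_simps power2_eq_square power4_eq_xxxx p5)
    have e2: "40 / m * (l^3 / 3) = l * (40 * l^2 * m) / (3 * m^2)"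
      using m0 by (simp add: field_simps power2_eq_square power3_eq_cube)
    show ?thesis unfolding e1 e2 by (rule divide_strict_right_mono[OF main2 m2])
  qed
  have "(\<Sum>i<n. (2 - 2 * cos (2 * pi * real i / real n)) * (x i)^2) + (\<Sum>i<n. (x i - x (sc n i))^2)
      < 40 / m * (\<Sum>i<n. (x i)^2)"
  proof -
    have "40 / m * (l^3 / 3) \<le> 40 / m * (\<Sum>i<n. (x i)^2)" using Nlow m100 by (intro mult_left_mono) auto
    then show ?thesis using Wsum Dsum fin by linarith
  qed
  then have "(\<Sum>i<n. x i * (\<Sum>j<n. hm n i j * x j)) > (4 - 40 / real n) * (\<Sum>i<n. (x i)^2)"
    unfolding qfull[OF n3] m_def by (simp add: algebra_simps)
  then show ?thesis by blast
qed



theorem lemma2p2: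
  shows "\<exists>n0::nat. \<forall>n\<ge>n0. n \<ge> 3 \<longrightarrow>
           4 - 40 / real n < largest_eigenvalue (heis_mat n) \<and>
           largest_eigenvalue (heis_mat n) < 4 - 2 / real n"
proof (intro exI[of _ 100] allI impI)
  fix n :: nat assume n: "100 \<le> n" and "3 \<le> n"
  define A where "A = heis_mat n"
  have A: "A \<in> carrier_mat n n" unfolding A_def by (rule heis_carrier)
  define E where "E = {k. eigenvalue A k}"
  have "char_poly A \<noteq> 0" using degree_monic_char_poly[OF A] by auto
  then have "finite {k. poly (char_poly A) k = 0}" by (rule poly_roots_finite)
  moreover have "E = {k. poly (char_poly A) k = 0}" unfolding E_def using eigenvalue_root_char_poly[OF A] by auto
  ultimately have finE: "finite E" by simp
  have dimA: "dim_row A = n" using A by simp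
  have evec: "\<exists>v. (\<exists>i<n. v i \<noteq> 0) \<and> (\<forall>i<n. (\<Sum>j<n. hm n i j * v j) = k * v i)" if "k \<in> E" for k
  proof -
    from that obtain w where w: "eigenvector A w k" unfolding E_def eigenvalue_def by auto
    then have wc: "w \<in> carrier_vec n" and w0: "w \<noteq> 0\<^sub>v n" and eq: "A *\<^sub>v w = k \<cdot>\<^sub>v w"
      unfolding eigenvector_def dimA by auto
    have "\<exists>i<n. w $ i \<noteq> 0"
    proof (rule ccontr)
      assume "\<not> ?thesis"
      then have "w = 0\<^sub>v n" using wc by (intro eq_vecI) auto
      then show False using w0 by simp
    qed
    moreover have "(\<Sum>j<n. hm n i j * w $ j) = k * w $ i" if i: "i < n" for i
    proof -
      have "(A *\<^sub>v w) $ i = (k \<cdot>\<^sub>v w) $ i" using eq by simp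
      moreover have "(A *\<^sub>v w) $ i = (\<Sum>j<n. hm n i j * w $ j)"
        using i wc A by (simp add: scalar_prod_def A_def heis_index lessThan_atLeast0)
      moreover have "(k \<cdot>\<^sub>v w) $ i = k * w $ i" using i wc by simp
      ultimately show ?thesis by simp
    qed
    ultimately show ?thesis by (intro exI[of _ "\<lambda>j. w $ j"]) auto
  qed
  have upE: "k < 4 - 2 / real n" if kE: "k \<in> E" for k
  proof -
    obtain v where v0: "\<exists>i<n. v i \<noteq> 0" and ev: "\<forall>i<n. (\<Sum>j<n. hm n i j * v j) = k * v i"
      using evec[OF kE] by blast
    have Npos: "(\<Sum>i<n. (v i)^2) > 0"
    proof -
      from v0 obtain i where i: "i < n" "v i \<noteq> 0" by blast
      have "(v i)^2 \<le> (\<Sum>i<n. (v i)^2)" using i by (intro member_le_sum) auto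
      moreover have "(v i)^2 > 0" using i by simp
      ultimately show ?thesis by linarith
    qed
    have "(\<Sum>i<n. v i * (\<Sum>j<n. hm n i j * v j)) = k * (\<Sum>i<n. (v i)^2)"
      using ev by (simp add: sum_distrib_left power2_eq_square mult_ac)
    with upper[of n v] n Npos have "k * (\<Sum>i<n. (v i)^2) < (4 - 2 / real n) * (\<Sum>i<n. (v i)^2)" by simp
    with Npos show ?thesis by simp
  qed
  obtain x where x: "(\<Sum>i<n. x i * (\<Sum>j<n. hm n i j * x j)) > (4 - 40 / real n) * (\<Sum>i<n. (x i)^2)"
    using lower[OF n] by blast
  have symh: "\<And>i j. i < n \<Longrightarrow> j < n \<Longrightarrow> hm n i j = hm n j i" using hm_sym by blast
  obtain \<mu> v where mu: "\<mu> > 4 - 40 / real n" and v0: "\<exists>i<n. v i \<noteq> 0"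
    and ev: "\<forall>i<n. (\<Sum>j<n. hm n i j * v j) = \<mu> * v i"
    using eig_exists[of n "hm n" "4 - 40 / real n" x, OF symh x] by blast
  have "eigenvector A (vec n v) \<mu>"
    unfolding eigenvector_def dimA
  proof (intro conjI)
    show "vec n v \<in> carrier_vec n" by simp
    show "vec n v \<noteq> 0\<^sub>v n"
    proof
      assume "vec n v = 0\<^sub>v n"
      then have "\<forall>i<n. v i = 0" by (metis index_vec index_zero_vec(1))
      then show False using v0 by blast
    qed
    show "A *\<^sub>v vec n v = \<mu> \<cdot>\<^sub>v vec n v"
    proof (rule eq_vecI)
      show "dim_vec (A *\<^sub>v vec n v) = dim_vec (\<mu> \<cdot>\<^sub>v vec n v)" using A by simp
      fix i assume "i < dim_vec (\<mu> \<cdot>\<^sub>v vec n v)"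
      then have i: "i < n" by simp
      have "(A *\<^sub>v vec n v) $ i = (\<Sum>j<n. hm n i j * v j)"
        using i A by (simp add: scalar_prod_def A_def heis_index lessThan_atLeast0)
      also have "\<dots> = \<mu> * v i" using ev i by simp
      also have "\<dots> = (\<mu> \<cdot>\<^sub>v vec n v) $ i" using i by simp
      finally show "(A *\<^sub>v vec n v) $ i = (\<mu> \<cdot>\<^sub>v vec n v) $ i" .
    qed
  qed
  then have muE: "\<mu> \<in> E" unfolding E_def eigenvalue_def by auto
  have "E \<noteq> {}" using muE by auto
  have "Max E \<in> E" using finE \<open>E \<noteq> {}\<close> by (rule Max_in)
  then have "Max E < 4 - 2 / real n" by (rule upE)
  moreover have "\<mu> \<le> Max E" using finE muE by (rule Max_ge)
  ultimately show "4 - 40 / real n < largest_eigenvalue (heis_mat n) \<and>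
           largest_eigenvalue (heis_mat n) < 4 - 2 / real n"
    using mu unfolding largest_eigenvalue_def E_def A_def by auto
qed


end
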